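(* Let $\lambda$ be a nonzero real number, $r$ a nonnegative integer, and $p(x)\in\mathbb{C}[x]$ of degree $n$. Let $g(t)=\frac{\lambda(e^t-1)}{e^{\lambda t}-1}$ and $f(t)=\frac{1}{\lambda}(e^{\lambda t}-1)$. Then: (a) If $r>n$, $$p(x)=\sum_{k=0}^{n}\frac{1}{k!}\sum_{j=0}^{k}(-1)^{k-j}\binom{k}{j}\big(g(t)^{r-k}p\big)(j)\;\beta^{(r)}_{k,\lambda}(x).$$ (b) If $r\le n$, $$p(x)=\sum_{k=0}^{r-1}\frac{1}{k!}\sum_{j=0}^{k}(-1)^{k-j}\binom{k}{j}\big(g(t)^{r-k}p\big)(j)\;\beta^{(r)}_{k,\lambda}(x)+\sum_{k=r}^{n}\frac{1}{k!}\sum_{j=0}^{r}(-1)^{r-j}\binom{r}{j}\big(f(t)^{k-r}p\big)(j)\;\beta^{(r)}_{k,\lambda}(x).$$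
   Context: Higher-order degenerate Bernoulli polynomials $\beta^{(r)}_{n,\lambda}(x)$ are defined by $\Big(\frac{t}{(1+\lambda t)^{1/\lambda}-1}\Big)^r(1+\lambda t)^{x/\lambda}=\sum_{n\ge0}\beta^{(r)}_{n,\lambda}(x)\frac{t^n}{n!}$. A formal power series $h(t)=\sum_{k\ge0}c_k\frac{t^k}{k!}$ acts on polynomials as the differential operator $h(t)x^m=\sum_{k=0}^m\binom{m}{k}c_kx^{m-k}$ (i.e. $t=d/dx$); $(h(t)p)(j)$ denotes the resulting polynomial evaluated at $x=j$. *)

theory Defs
  imports "HOL-Computational_Algebra.Computational_Algebra"
begin

definition binom_pow_fps :: "real \<Rightarrow> complex \<Rightarrow> complex fps" where
  "binom_pow_fps lam a = fps_compose (fps_binomial a) (fps_const (of_real lam) * fps_X)"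

definition deg_bernoulli_gf :: "real \<Rightarrow> nat \<Rightarrow> complex \<Rightarrow> complex fps" where
  "deg_bernoulli_gf lam r x =
     (fps_X / (binom_pow_fps lam (1 / of_real lam) - 1)) ^ r * binom_pow_fps lam (x / of_real lam)"

definition deg_bernoulli :: "nat \<Rightarrow> real \<Rightarrow> nat \<Rightarrow> complex \<Rightarrow> complex" where
  "deg_bernoulli r lam n x = fact n * fps_nth (deg_bernoulli_gf lam r x) n"

text \<open>Action of h(t) = sum c_k t^k/k! on polynomials: h(t) x^m = sum_{k<=m} (m choose k) c_k x^(m-k),
  extended linearly; here c_k = k! * (h $ k).\<close>
definition fps_act :: "complex fps \<Rightarrow> complex poly \<Rightarrow> complex poly" where
  "fps_act h p = (\<Sum>m\<le>degree p. smult (coeff p m)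
      (\<Sum>k\<le>m. monom (of_nat (m choose k) * (fact k * fps_nth h k)) (m - k)))"

definition g_fps :: "real \<Rightarrow> complex fps" where
  "g_fps lam = fps_const (of_real lam) * (fps_exp 1 - 1) / (fps_exp (of_real lam) - 1)"

definition f_fps :: "real \<Rightarrow> complex fps" where
  "f_fps lam = fps_const (1 / of_real lam) * (fps_exp (of_real lam) - 1)"

end

theory Submission
  imports Defs
begin

lemma binom_compose_exp:
  fixes a c :: complex
  shows "fps_binomial a oo (fps_exp c - 1) = fps_exp (c * a)"
proof -
  define B where "B = (fps_binomial a :: complex fps)"
  define b where "b = (fps_exp c - 1 :: complex fps)"
  define h where "h = B oo b"
  have b0: "b $ 0 = 0" by (simp add: b_def)
  have u0: "(1 + fps_X :: complex fps) $ 0 = 1" by simp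
  hence u: "(1 + fps_X :: complex fps) \<noteq> 0" by auto
  have "subdegree (1 + fps_X :: complex fps) = 0" using u0 by (simp add: subdegree_eq_0_iff)
  hence D: "(1 + fps_X) * fps_deriv B = fps_const a * B"
    unfolding B_def fps_binomial_deriv
    using fps_times_divide_eq[OF u] by (simp add: mult.commute)
  have "((1 + fps_X) * fps_deriv B) oo b = (fps_const a * B) oo b" using D by simp
  hence E: "fps_exp c * (fps_deriv B oo b) = fps_const a * h"
    by (simp add: fps_compose_mult_distrib[OF b0] fps_compose_add_distrib b0 h_def
       fps_const_mult_apply_left[symmetric]) (simp add: b_def)
  have hd: "fps_deriv h = (fps_deriv B oo b) * (fps_const c * fps_exp c)"
    unfolding h_def by (simp add: fps_compose_deriv[OF b0]) (simp add: b_def)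
  have "fps_exp c * fps_deriv h = fps_exp c * (fps_const (c*a) * h)"
    unfolding hd using E by (simp add: algebra_simps)
  moreover have "fps_exp c \<noteq> (0::complex fps)"
    by (metis fps_exp_nth fps_zero_nth power_0 fact_0 div_by_1 of_nat_1 one_neq_zero)
  ultimately have "fps_deriv h = fps_const (c*a) * h" by simp
  hence "h = fps_const (h$0) * fps_exp (c*a)" using fps_exp_unique_ODE by blast
  moreover have "h $ 0 = 1" by (simp add: h_def B_def)
  ultimately show ?thesis by (simp add: h_def B_def b_def)
qed
lemma subdeg_exp1:
  assumes "c \<noteq> (0::complex)"
  shows "subdegree (fps_const d * (fps_exp c - 1)) = (if d = 0 then 0 else 1)"
proof (cases "d = 0")
  case False
  show ?thesis using False assms by (intro subdegreeI[THEN trans]) auto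
qed simp

lemma exp_minus1_nz: "c \<noteq> (0::complex) \<Longrightarrow> fps_exp c - 1 \<noteq> 0"
proof
  assume "c \<noteq> 0" "fps_exp c - 1 = 0"
  hence "(fps_exp c - 1) $ 1 = 0" by simp
  thus False using \<open>c \<noteq> 0\<close> by simp
qed

lemma gf_prod:
  assumes "lam \<noteq> 0"
  shows "g_fps lam * f_fps lam = fps_exp 1 - 1"
proof -
  define E where "E = fps_exp (complex_of_real lam) - 1"
  have l: "complex_of_real lam \<noteq> 0" using assms by simp
  have Enz: "E \<noteq> 0" using exp_minus1_nz[OF l] by (simp add: E_def)
  have s1: "subdegree E = 1" using subdeg_exp1[OF l, of 1] by (simp add: E_def)
  have s2: "subdegree (fps_const (complex_of_real lam) * (fps_exp 1 - 1)) = 1"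
    using subdeg_exp1[of 1 "complex_of_real lam"] l by simp
  have "g_fps lam * f_fps lam = fps_const (1 / complex_of_real lam) * 
      ((fps_const (complex_of_real lam) * (fps_exp 1 - 1)) / E * E)"
    unfolding g_fps_def f_fps_def E_def by (simp add: algebra_simps)
  also have "\<dots> = fps_const (1 / complex_of_real lam) * (fps_const (complex_of_real lam) * (fps_exp 1 - 1))"
    using fps_times_divide_eq[OF Enz] s1 s2 by simp
  also have "\<dots> = fps_exp 1 - 1" using l
    by (simp add: mult.assoc[symmetric] fps_const_mult[symmetric] del: fps_const_mult)
  finally show ?thesis .
qed

lemma f0: "f_fps lam $ 0 = 0" by (simp add: f_fps_def)

lemma binom_pow_compose_f:
  assumes "lam \<noteq> 0"
  shows "binom_pow_fps lam a oo f_fps lam = fps_exp (a * complex_of_real lam)"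
proof -
  have l: "complex_of_real lam \<noteq> 0" using assms by simp
  have "binom_pow_fps lam a oo f_fps lam = fps_binomial a oo ((fps_const (complex_of_real lam) * fps_X) oo f_fps lam)"
    unfolding binom_pow_fps_def by (rule fps_compose_assoc[symmetric]) (simp_all add: f0)
  also have "(fps_const (complex_of_real lam) * fps_X) oo f_fps lam = fps_exp (complex_of_real lam) - 1"
    using l by (simp add: fps_const_mult_apply_left[symmetric] f0 f_fps_def mult.assoc[symmetric] fps_const_mult[symmetric] del: fps_const_mult)
  finally show ?thesis by (simp add: binom_compose_exp mult.commute)
qed
lemma binom_pow_nth: "binom_pow_fps lam a $ n = complex_of_real lam ^ n * (a gchoose n)"
  unfolding binom_pow_fps_def fps_compose_linear by simp

lemma gen_fun_key:
  assumes "lam \<noteq> 0"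
  shows "g_fps lam ^ r * (deg_bernoulli_gf lam r x oo f_fps lam) = fps_exp x"
proof -
  have l: "complex_of_real lam \<noteq> 0" using assms by simp
  define D where "D = binom_pow_fps lam (1 / complex_of_real lam) - 1"
  define Q where "Q = fps_X / D"
  have D1: "D $ 1 = 1" using l by (simp add: D_def binom_pow_nth)
  have D0: "D $ 0 = 0" by (simp add: D_def binom_pow_nth)
  have Dnz: "D \<noteq> 0" using D1 by auto
  have sD: "subdegree D = 1" using D0 D1 by (intro subdegreeI) auto
  have QD: "Q * D = fps_X" unfolding Q_def using fps_times_divide_eq[OF Dnz] sD by simp
  have "(Q * D) oo f_fps lam = f_fps lam" using QD by (simp add: f0)
  hence QDf: "(Q oo f_fps lam) * (fps_exp 1 - 1) = f_fps lam"
    using l by (simp add: fps_compose_mult_distrib[OF f0] D_def fps_compose_sub_distrib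
        binom_pow_compose_f[OF assms])
  have "(Q oo f_fps lam) * (fps_exp 1 - 1) * g_fps lam = f_fps lam * g_fps lam"
    using QDf by simp
  hence "((Q oo f_fps lam) * g_fps lam) * (fps_exp 1 - 1) = 1 * (fps_exp 1 - 1)"
    using gf_prod[OF assms] by (simp add: algebra_simps)
  hence Qg: "(Q oo f_fps lam) * g_fps lam = 1"
    using exp_minus1_nz[of 1] by (metis mult_right_cancel one_neq_zero)
  have "deg_bernoulli_gf lam r x oo f_fps lam
      = (Q oo f_fps lam) ^ r * fps_exp x"
    unfolding deg_bernoulli_gf_def Q_def[symmetric] D_def[symmetric]
    using l by (simp add: fps_compose_mult_distrib[OF f0] fps_compose_power[OF f0]
        binom_pow_compose_f[OF assms])
  hence "g_fps lam ^ r * (deg_bernoulli_gf lam r x oo f_fps lam) = ((Q oo f_fps lam) * g_fps lam) ^ r * fps_exp x"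
    by (simp add: power_mult_distrib algebra_simps)
  thus ?thesis using Qg by simp
qed
lemma comp_coeff:
  fixes a b c :: "complex fps"
  assumes b0: "b $ 0 = 0" and mN: "m \<le> N"
  shows "(c * (a oo b)) $ m = (\<Sum>k\<le>N. a $ k * (c * b ^ k) $ m)"
proof -
  have z: "(b ^ k) $ j = 0" if "j < k" for j k using startsby_zero_power_prefix[OF b0] that by blast
  have "(c * (a oo b)) $ m = (\<Sum>i=0..m. c $ i * (\<Sum>k=0..m-i. a $ k * (b ^ k) $ (m - i)))"
    by (simp add: fps_mult_nth fps_compose_nth)
  also have "\<dots> = (\<Sum>i=0..m. c $ i * (\<Sum>k\<le>N. a $ k * (b ^ k) $ (m - i)))"
  proof (rule sum.cong[OF refl])
    fix i assume i: "i \<in> {0..m}"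
    have "(\<Sum>k\<le>N. a $ k * (b ^ k) $ (m - i)) = (\<Sum>k=0..m-i. a $ k * (b ^ k) $ (m - i))"
      by (rule sum.mono_neutral_right) (use mN z in auto)
    thus "c $ i * (\<Sum>k=0..m-i. a $ k * (b ^ k) $ (m - i)) = c $ i * (\<Sum>k\<le>N. a $ k * (b ^ k) $ (m - i))"
      by simp
  qed
  also have "\<dots> = (\<Sum>k\<le>N. a $ k * (\<Sum>i=0..m. c $ i * (b ^ k) $ (m - i)))"
    by (simp add: sum_distrib_left sum_distrib_right mult.assoc mult.left_commute sum.swap[of _ "{0..m}"])
  also have "\<dots> = (\<Sum>k\<le>N. a $ k * (c * b ^ k) $ m)"
    by (simp add: fps_mult_nth)
  finally show ?thesis .
qed

lemma bf: "k \<le> m \<Longrightarrow> of_nat (m choose k) * (fact k :: complex) * fact (m - k) = fact m"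
proof -
  assume "k \<le> m"
  hence "(of_nat (fact k * fact (m - k) * (m choose k)) :: complex) = of_nat (fact m)"
    using binomial_fact_lemma by metis
  thus ?thesis by (simp only: of_nat_mult of_nat_fact mult_ac)
qed

lemma inner_lem: fixes h :: "complex fps" shows "poly (\<Sum>k\<le>m. monom (of_nat (m choose k) * (fact k * fps_nth h k)) (m - k)) y
     = fact m * (h * fps_exp y) $ m"
  proof -
    have "poly (\<Sum>k\<le>m. monom (of_nat (m choose k) * (fact k * fps_nth h k)) (m - k)) y
       = (\<Sum>k\<le>m. of_nat (m choose k) * (fact k * h $ k) * y ^ (m - k))"
      unfolding poly_sum poly_monom by (rule refl)
    also have "\<dots> = (\<Sum>k\<le>m. fact m * (h $ k * (y ^ (m - k) / fact (m - k))))"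
    proof (rule sum.cong[OF refl])
      fix k assume "k \<in> {..m}"
      hence km: "k \<le> m" by simp
      have e: "of_nat (m choose k) * (fact k :: complex) = fact m / fact (m - k)"
        using bf[OF km] by (simp add: eq_divide_eq)
      show "of_nat (m choose k) * (fact k * h $ k) * y ^ (m - k) = fact m * (h $ k * (y ^ (m - k) / fact (m - k)))"
        by (simp add: mult.assoc[symmetric] e) 
    qed
    also have "\<dots> = fact m * (\<Sum>k\<le>m. h $ k * (y ^ (m - k) / fact (m - k)))"
      by (rule sum_distrib_left[symmetric])
    also have "\<dots> = fact m * (h * fps_exp y) $ m"
      by (simp add: fps_mult_nth atLeast0AtMost)
    finally show ?thesis .
  qed

lemma act_eval:
  "poly (fps_act h p) y = (\<Sum>m\<le>degree p. coeff p m * fact m * (h * fps_exp y) $ m)"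
  unfolding fps_act_def poly_sum[where A="{..degree p}"] poly_smult inner_lem by (simp add: mult.assoc)
lemma exp_binom: "(\<Sum>j\<le>k. fps_const ((-1) ^ (k - j) * of_nat (k choose j)) * fps_exp (of_nat j :: complex))
   = (fps_exp 1 - 1) ^ k"
proof -
  have "(fps_exp 1 - 1 :: complex fps) ^ k = (fps_exp 1 + (-1)) ^ k" by simp
  also have "\<dots> = (\<Sum>j\<le>k. of_nat (k choose j) * fps_exp 1 ^ j * (-1) ^ (k - j))"
    by (rule binomial_ring)
  also have "\<dots> = (\<Sum>j\<le>k. fps_const ((-1) ^ (k - j) * of_nat (k choose j)) * fps_exp (of_nat j :: complex))"
  proof (rule sum.cong[OF refl])
    fix j
    have n1: "fps_const ((-1::complex) ^ (k - j)) = (-1) ^ (k - j)"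
      by (metis fps_const_power fps_const_neg fps_const_1_eq_1)
    have "fps_const ((-1) ^ (k - j) * of_nat (k choose j) :: complex) = (-1) ^ (k - j) * of_nat (k choose j)"
      by (simp only: fps_const_mult[symmetric] n1 fps_of_nat)
    thus "of_nat (k choose j) * fps_exp 1 ^ j * (-1) ^ (k - j) = fps_const ((-1) ^ (k - j) * of_nat (k choose j)) * fps_exp (of_nat j :: complex)"
      by (simp add: fps_exp_power_mult mult_ac)
  qed
  finally show ?thesis by simp
qed

lemma diff_sum:
  "(\<Sum>j\<le>k. (-1) ^ (k - j) * of_nat (k choose j) * poly (fps_act h p) (of_nat j))
   = (\<Sum>m\<le>degree p. coeff p m * fact m * (h * (fps_exp 1 - 1) ^ k) $ m)"
proof -
  have "(\<Sum>j\<le>k. (-1) ^ (k - j) * of_nat (k choose j) * poly (fps_act h p) (of_nat j))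
     = (\<Sum>m\<le>degree p. coeff p m * fact m * (\<Sum>j\<le>k. (-1) ^ (k - j) * of_nat (k choose j) * (h * fps_exp (of_nat j)) $ m))"
    by (simp add: act_eval sum_distrib_left sum_distrib_right mult_ac sum.swap[of _ "{..k}"])
  also have "\<dots> = (\<Sum>m\<le>degree p. coeff p m * fact m * (h * (\<Sum>j\<le>k. fps_const ((-1) ^ (k - j) * of_nat (k choose j)) * fps_exp (of_nat j :: complex))) $ m)"
    by (simp add: sum_distrib_left fps_sum_nth mult.left_commute[of h])
  finally show ?thesis by (simp only: exp_binom)
qed
lemma expansion:
  assumes "lam \<noteq> 0"
  shows "poly p x = (\<Sum>k\<le>degree p. (1 / fact k) *
     (\<Sum>m\<le>degree p. coeff p m * fact m * (g_fps lam ^ r * f_fps lam ^ k) $ m) * deg_bernoulli r lam k x)"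
proof -
  define B where "B = deg_bernoulli_gf lam r x"
  define G where "G = g_fps lam ^ r"
  have "(\<Sum>k\<le>degree p. (1 / fact k) *
     (\<Sum>m\<le>degree p. coeff p m * fact m * (G * f_fps lam ^ k) $ m) * deg_bernoulli r lam k x)
    = (\<Sum>k\<le>degree p. \<Sum>m\<le>degree p. coeff p m * fact m * (B $ k * (G * f_fps lam ^ k) $ m))"
  proof (rule sum.cong[OF refl])
    fix k
    have "(1 / fact k) * (\<Sum>m\<le>degree p. coeff p m * fact m * (G * f_fps lam ^ k) $ m) * deg_bernoulli r lam k x
       = (\<Sum>m\<le>degree p. coeff p m * fact m * (G * f_fps lam ^ k) $ m) * B $ k"
      by (simp add: deg_bernoulli_def B_def)
    also have "\<dots> = (\<Sum>m\<le>degree p. coeff p m * fact m * (B $ k * (G * f_fps lam ^ k) $ m))"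
      unfolding sum_distrib_right by (rule sum.cong[OF refl]) (simp only: mult_ac)
    finally show "(1 / fact k) * (\<Sum>m\<le>degree p. coeff p m * fact m * (G * f_fps lam ^ k) $ m) * deg_bernoulli r lam k x
       = (\<Sum>m\<le>degree p. coeff p m * fact m * (B $ k * (G * f_fps lam ^ k) $ m))" .
  qed
  also have "\<dots> = (\<Sum>m\<le>degree p. coeff p m * fact m * (\<Sum>k\<le>degree p. B $ k * (G * f_fps lam ^ k) $ m))"
    unfolding sum_distrib_left by (rule sum.swap)
  also have "\<dots> = (\<Sum>m\<le>degree p. coeff p m * fact m * (G * (B oo f_fps lam)) $ m)"
    by (rule sum.cong[OF refl]) (simp add: comp_coeff[OF f0])
  also have "\<dots> = (\<Sum>m\<le>degree p. coeff p m * x ^ m)"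
    by (simp add: G_def B_def gen_fun_key[OF assms])
  also have "\<dots> = poly p x" by (simp add: poly_altdef)
  finally show ?thesis by (simp add: G_def)
qed

lemma coeffs_low:
  assumes "lam \<noteq> 0" "k \<le> r"
  shows "g_fps lam ^ (r - k) * (fps_exp 1 - 1) ^ k = g_fps lam ^ r * f_fps lam ^ k"
proof -
  have "g_fps lam ^ (r - k) * (fps_exp 1 - 1) ^ k = g_fps lam ^ (r - k) * (g_fps lam ^ k * f_fps lam ^ k)"
    by (simp add: gf_prod[OF assms(1), symmetric] power_mult_distrib)
  also have "\<dots> = g_fps lam ^ r * f_fps lam ^ k"
    using assms(2) by (simp add: mult.assoc[symmetric] power_add[symmetric])
  finally show ?thesis .
qed

lemma coeffs_high:
  assumes "lam \<noteq> 0" "r \<le> k"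
  shows "f_fps lam ^ (k - r) * (fps_exp 1 - 1) ^ r = g_fps lam ^ r * f_fps lam ^ k"
proof -
  have "f_fps lam ^ (k - r) * (fps_exp 1 - 1) ^ r = f_fps lam ^ (k - r) * (g_fps lam ^ r * f_fps lam ^ r)"
    by (simp add: gf_prod[OF assms(1), symmetric] power_mult_distrib)
  also have "\<dots> = g_fps lam ^ r * (f_fps lam ^ (k - r) * f_fps lam ^ r)"
    by (simp add: mult_ac)
  also have "\<dots> = g_fps lam ^ r * f_fps lam ^ k"
    using assms(2) by (simp add: power_add[symmetric])
  finally show ?thesis .
qed

theorem theorem4p1:
  fixes lam :: real and r n :: nat and p :: "complex poly"
  assumes "lam \<noteq> 0" and "degree p = n"
  shows "(r > n \<longrightarrow> (\<forall>x. poly p x =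
            (\<Sum>k\<le>n. (1 / fact k) *
               (\<Sum>j\<le>k. (-1) ^ (k - j) * of_nat (k choose j) *
                   poly (fps_act (g_fps lam ^ (r - k)) p) (of_nat j))
               * deg_bernoulli r lam k x)))
       \<and> (r \<le> n \<longrightarrow> (\<forall>x. poly p x =
            (\<Sum>k<r. (1 / fact k) *
               (\<Sum>j\<le>k. (-1) ^ (k - j) * of_nat (k choose j) *
                   poly (fps_act (g_fps lam ^ (r - k)) p) (of_nat j))
               * deg_bernoulli r lam k x)
          + (\<Sum>k=r..n. (1 / fact k) *
               (\<Sum>j\<le>r. (-1) ^ (r - j) * of_nat (r choose j) *
                   poly (fps_act (f_fps lam ^ (k - r)) p) (of_nat j))
               * deg_bernoulli r lam k x)))"
proof (intro conjI impI allI)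
  fix x
  define T where "T k = (1 / fact k) *
     (\<Sum>m\<le>degree p. coeff p m * fact m * (g_fps lam ^ r * f_fps lam ^ k) $ m) * deg_bernoulli r lam k x" for k
  have E: "poly p x = (\<Sum>k\<le>n. T k)" unfolding T_def using expansion[OF assms(1), of p x r] by (simp only: assms(2))
  have low: "(1 / fact k) * (\<Sum>j\<le>k. (-1) ^ (k - j) * of_nat (k choose j) *
                   poly (fps_act (g_fps lam ^ (r - k)) p) (of_nat j)) * deg_bernoulli r lam k x = T k"
    if "k \<le> r" for k
    unfolding diff_sum T_def coeffs_low[OF assms(1) that] ..
  have high: "(1 / fact k) * (\<Sum>j\<le>r. (-1) ^ (r - j) * of_nat (r choose j) *
                   poly (fps_act (f_fps lam ^ (k - r)) p) (of_nat j)) * deg_bernoulli r lam k x = T k"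
    if "r \<le> k" for k
    unfolding diff_sum T_def coeffs_high[OF assms(1) that] ..
  {
    assume "r > n"
    thus "poly p x = (\<Sum>k\<le>n. (1 / fact k) *
               (\<Sum>j\<le>k. (-1) ^ (k - j) * of_nat (k choose j) *
                   poly (fps_act (g_fps lam ^ (r - k)) p) (of_nat j))
               * deg_bernoulli r lam k x)"
      unfolding E by (intro sum.cong refl low[symmetric]) auto
  }
  {
    assume rn: "r \<le> n"
    have U: "{..n} = {..<r} \<union> {r..n}" using rn by auto
    have "poly p x = (\<Sum>k<r. T k) + (\<Sum>k=r..n. T k)"
      unfolding E U by (rule sum.union_disjoint) auto
    also have "(\<Sum>k<r. T k) = (\<Sum>k<r. (1 / fact k) *
               (\<Sum>j\<le>k. (-1) ^ (k - j) * of_nat (k choose j) *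
                   poly (fps_act (g_fps lam ^ (r - k)) p) (of_nat j))
               * deg_bernoulli r lam k x)"
      by (intro sum.cong refl low[symmetric]) auto
    also have "(\<Sum>k=r..n. T k) = (\<Sum>k=r..n. (1 / fact k) *
               (\<Sum>j\<le>r. (-1) ^ (r - j) * of_nat (r choose j) *
                   poly (fps_act (f_fps lam ^ (k - r)) p) (of_nat j))
               * deg_bernoulli r lam k x)"
      by (intro sum.cong refl high[symmetric]) auto
    finally show "poly p x = (\<Sum>k<r. (1 / fact k) *
               (\<Sum>j\<le>k. (-1) ^ (k - j) * of_nat (k choose j) *
                   poly (fps_act (g_fps lam ^ (r - k)) p) (of_nat j))
               * deg_bernoulli r lam k x)
          + (\<Sum>k=r..n. (1 / fact k) *
               (\<Sum>j\<le>r. (-1) ^ (r - j) * of_nat (r choose j) *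
                   poly (fps_act (f_fps lam ^ (k - r)) p) (of_nat j))
               * deg_bernoulli r lam k x)" .
  }
qed

end
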